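(* Let $\lambda,\mu,\rho,\mathsf D>0$, $X=\mathbb R$, $Y=[-\frac12\mathsf D,\frac12\mathsf D]$, and let $\hat f=\hat f_1$, i.e. $\hat f(x,y)=f(x,\hat y)+\partial_y f(x,\hat y)(y-\hat y)$. 1. If $\mu\le\sqrt{\lambda\rho/2}$, then for $f=F_{1,-1,\lambda,\mu,\rho}$ there exist $\hat y\in Y$ and $x^*\in\mathbb R$ such that $\hat\varphi_{2\lambda}'(x^* )=0$ while $|\varphi_{2\lambda}'(x^* )|\ge\frac{\mu\mathsf D}{3}$. 2. If $\mu\ge\sqrt{\lambda\rho/2}$, then there exist $\bar\mu\le\mu$, $\bar\rho\le\rho$, $\hat y\in Y$ and $x^*\in\mathbb R$ such that, for $f=F_{1,1,\lambda,\bar\mu,\bar\rho}$, $\hat\varphi_{2\lambda}'(x^* )=0$ while $|\varphi_{2\lambda}'(x^* )|\ge\sqrt{\frac{\lambda\rho\mathsf D^2}{8}}$.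
   Context: For $k\in\mathbb N\cup\{0\}$, $s\in\{\pm1,0\}$, $\lambda>0$, $\mu\ge0$, $\rho\ge0$: $F_{k,s,\lambda,\mu,\rho}(x,y)=-\frac{\lambda x^2}{2}+\mu xy+\frac{s\rho|y|^{k+1}}{(k+1)!}$ on $\mathbb R\times\mathbb R$. Given $f$, $X,Y\subseteq\mathbb R$ and $\hat y\in Y$: $\varphi(x)=\max_{y\in Y}f(x,y)$, $\hat\varphi(x)=\max_{y\in Y}\hat f(x,y)$, and for a function $\phi$ on $X$, $\phi_{2\lambda}(x)=\min_{u\in X}\{\phi(u)+\lambda(u-x)^2\}$ (Moreau envelope with parameter $2\lambda$); $'$ denotes the derivative in $x$. *)

theory Defs
  imports "HOL-Analysis.Analysis"
begin

definition F :: "nat \<Rightarrow> real \<Rightarrow> real \<Rightarrow> real \<Rightarrow> real \<Rightarrow> real \<Rightarrow> real \<Rightarrow> real" where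
  "F k s lam mu rho x y =
     - (lam * x\<^sup>2 / 2) + mu * x * y + s * rho * \<bar>y\<bar> ^ (k + 1) / fact (k + 1)"

definition maxval :: "real set \<Rightarrow> (real \<Rightarrow> real \<Rightarrow> real) \<Rightarrow> real \<Rightarrow> real" where
  "maxval Y f x = (SUP y\<in>Y. f x y)"

text \<open>Moreau envelope phi_{2 lambda}(x) = min over u in X of phi(u) + lambda (u - x)^2.\<close>
definition moreau :: "real set \<Rightarrow> real \<Rightarrow> (real \<Rightarrow> real) \<Rightarrow> real \<Rightarrow> real" where
  "moreau X lam phi x = (INF u\<in>X. phi u + lam * (u - x)\<^sup>2)"

definition lin_model :: "(real \<Rightarrow> real \<Rightarrow> real) \<Rightarrow> real \<Rightarrow> real \<Rightarrow> real \<Rightarrow> real" where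
  "lin_model f yh x y = f x yh + deriv (\<lambda>t. f x t) yh * (y - yh)"

end

theory Submission
  imports Defs
begin

lemma deriv_squeeze:
  fixes M l h :: "real \<Rightarrow> real"
  assumes lM: "\<And>x. l x \<le> M x" and Mh: "\<And>x. M x \<le> h x" and eq: "l xs = h xs"
    and dl: "(l has_real_derivative d) (at xs)" and dh: "(h has_real_derivative d) (at xs)"
  shows "(M has_real_derivative d) (at xs)"
proof -
  define g where "g = (\<lambda>x. h x - l x)"
  define e where "e = (\<lambda>x. M x - l x)"
  have Mxs: "M xs = l xs" using lM[of xs] Mh[of xs] eq by linarith
  have dg: "(g has_real_derivative 0) (at xs)"
    unfolding g_def using DERIV_diff[OF dh dl] by simp
  have g0: "g xs = 0" using eq by (simp add: g_def)
  have e0: "e xs = 0" using Mxs by (simp add: e_def)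
  have "((\<lambda>y. (g y - g xs) / (y - xs)) \<longlongrightarrow> 0) (at xs)"
    using dg by (simp add: has_field_derivative_iff)
  then have t: "((\<lambda>y. \<bar>(g y - g xs) / (y - xs)\<bar>) \<longlongrightarrow> 0) (at xs)"
    using tendsto_rabs_zero by blast
  have "((\<lambda>y. (e y - e xs) / (y - xs)) \<longlongrightarrow> 0) (at xs)"
  proof (rule Lim_null_comparison[OF _ t])
    show "\<forall>\<^sub>F y in at xs. norm ((e y - e xs) / (y - xs)) \<le> \<bar>(g y - g xs) / (y - xs)\<bar>"
    proof (rule always_eventually, rule allI)
      fix y
      have "0 \<le> e y" "e y \<le> g y" using lM[of y] Mh[of y] by (auto simp: e_def g_def)
      then show "norm ((e y - e xs) / (y - xs)) \<le> \<bar>(g y - g xs) / (y - xs)\<bar>"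
        using e0 g0 by (simp add: abs_divide divide_right_mono)
    qed
  qed
  then have de: "(e has_real_derivative 0) (at xs)"
    by (simp add: has_field_derivative_iff)
  have "M = (\<lambda>x. l x + e x)" by (simp add: e_def)
  then show ?thesis using DERIV_add[OF dl de] by simp
qed

lemma env_deriv:
  fixes f :: "real \<Rightarrow> real \<Rightarrow> real" and Y :: "real set"
  assumes lam: "lam > 0" and yy: "yy \<in> Y"
    and bdd: "\<And>u. bdd_above (f u ` Y)"
    and top: "\<And>y. y \<in> Y \<Longrightarrow> f ub y \<le> f ub yy"
    and lin: "\<And>u. f u yy = - lam * u\<^sup>2 / 2 + a + b * u"
    and stat: "lam * ub = 2 * lam * xs - b"
  shows "((moreau UNIV lam (maxval Y f)) has_real_derivative (2 * lam * (xs - ub))) (at xs)"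
proof -
  define phi where "phi = maxval Y f"
  have phi_ge: "phi u \<ge> f u yy" for u
    unfolding phi_def maxval_def by (rule cSUP_upper[OF yy bdd])
  have phi_ub: "phi ub = f ub yy"
  proof -
    have "phi ub \<le> f ub yy" unfolding phi_def maxval_def
      using yy top by (intro cSUP_least) auto
    then show ?thesis using phi_ge[of ub] by linarith
  qed
  define l where "l = (\<lambda>x. lam * x\<^sup>2 + a - (2 * lam * x - b)\<^sup>2 / (2 * lam))"
  define h where "h = (\<lambda>x. phi ub + lam * (ub - x)\<^sup>2)"
  have Gl: "l x \<le> phi u + lam * (u - x)\<^sup>2" for u x
  proof -
    have sq: "0 \<le> (lam * u + b - 2 * lam * x)\<^sup>2 / (2 * lam)" using lam by simp
    have "(lam * u + b - 2 * lam * x)\<^sup>2 / (2 * lam) = lam * u\<^sup>2 / 2 + (b - 2*lam*x) * u + (2 * lam * x - b)\<^sup>2 / (2 * lam)"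
      using lam by (simp add: field_simps power2_eq_square)
    then have "l x \<le> f u yy + lam * (u - x)\<^sup>2" using sq unfolding lin l_def
      by (simp add: power2_eq_square algebra_simps)
    then show ?thesis using phi_ge[of u] by linarith
  qed
  have bb: "bdd_below ((\<lambda>u. phi u + lam * (u - x)\<^sup>2) ` UNIV)" for x
    using Gl by (intro bdd_belowI2) blast
  have lo: "l x \<le> moreau UNIV lam phi x" for x
    unfolding moreau_def by (rule cINF_greatest) (auto intro: Gl)
  have hi: "moreau UNIV lam phi x \<le> h x" for x
    unfolding moreau_def h_def by (rule cINF_lower[OF bb]) auto
  have eq: "l xs = h xs"
  proof -
    have b: "b = 2 * lam * xs - lam * ub" using stat by simp
    show ?thesis unfolding l_def h_def phi_ub lin b using lam
      by (simp add: field_simps power2_eq_square)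
  qed
  have dl: "(l has_real_derivative (2 * lam * (xs - ub))) (at xs)"
  proof -
    have "(l has_real_derivative (2 * lam * xs - 2 * (2 * lam * xs - b))) (at xs)"
      unfolding l_def using lam
      by (auto intro!: derivative_eq_intros simp: field_simps power2_eq_square)
    moreover have "2 * lam * xs - 2 * (2 * lam * xs - b) = 2 * lam * (xs - ub)" using stat by (simp add: algebra_simps)
    ultimately show ?thesis by simp
  qed
  have dh: "(h has_real_derivative (2 * lam * (xs - ub))) (at xs)"
    unfolding h_def
    by (auto intro!: derivative_eq_intros simp: field_simps power2_eq_square)
  show ?thesis unfolding phi_def[symmetric]
    by (rule deriv_squeeze[OF lo hi eq dl dh])
qed


lemma F1: "F 1 s lam m r = (\<lambda>x y. - (lam * x\<^sup>2 / 2) + m * x * y + s * r * y\<^sup>2 / 2)"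
  by (auto simp: fun_eq_iff F_def numeral_2_eq_2[symmetric])

lemma lin1: "lin_model (F 1 s lam m r) yh = (\<lambda>x y. - (lam * x\<^sup>2 / 2) + m * x * yh + s * r * yh\<^sup>2 / 2 + (m * x + s * r * yh) * (y - yh))"
proof -
  have "deriv (\<lambda>t. - (lam * x\<^sup>2 / 2) + m * x * t + s * r * t\<^sup>2 / 2) yh = m * x + s * r * yh" for x
    by (rule DERIV_imp_deriv) (auto intro!: derivative_eq_intros)
  then show ?thesis unfolding lin_model_def F1 by (simp add: fun_eq_iff)
qed

lemma bddI: fixes g :: "real \<Rightarrow> real" assumes "continuous_on {a..b} g" shows "bdd_above (g ` {a..(b::real)})"
proof -
  have "compact (g ` {a..b})" by (rule compact_continuous_image[OF assms compact_Icc])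
  then have "bounded (g ` {a..b})" by (rule compact_imp_bounded)
  then show ?thesis by (rule bounded_imp_bdd_above)
qed

theorem proposition4:
  fixes lam mu rho D :: real
  assumes "lam > 0" and "mu > 0" and "rho > 0" and "D > 0"
  defines "Y \<equiv> {- D / 2 .. D / 2}"
  shows
   "(mu \<le> sqrt (lam * rho / 2) \<longrightarrow>
      (let f = F 1 (-1) lam mu rho in
       \<exists>yh \<in> Y. \<exists>xs :: real.
         ((moreau UNIV lam (maxval Y (lin_model f yh))) has_real_derivative 0) (at xs) \<and>
         (\<exists>d. ((moreau UNIV lam (maxval Y f)) has_real_derivative d) (at xs) \<and>
              \<bar>d\<bar> \<ge> mu * D / 3)))
    \<and>
    (mu \<ge> sqrt (lam * rho / 2) \<longrightarrow>
      (\<exists>mub rhob. 0 \<le> mub \<and> mub \<le> mu \<and> 0 \<le> rhob \<and> rhob \<le> rho \<and>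
       (let f = F 1 1 lam mub rhob in
       \<exists>yh \<in> Y. \<exists>xs :: real.
         ((moreau UNIV lam (maxval Y (lin_model f yh))) has_real_derivative 0) (at xs) \<and>
         (\<exists>d. ((moreau UNIV lam (maxval Y f)) has_real_derivative d) (at xs) \<and>
              \<bar>d\<bar> \<ge> sqrt (lam * rho * D\<^sup>2 / 8)))))"
proof (intro conjI impI)
  note pos = assms(1-4)
  have bdd: "bdd_above ((\<lambda>y. c0 + c1 * y + c2 * y\<^sup>2) ` Y)" for c0 c1 c2
    unfolding Y_def by (intro bddI continuous_intros)
  {
    assume hmu: "mu \<le> sqrt (lam * rho / 2)"
    have mu2: "mu\<^sup>2 \<le> lam * rho / 2"
      using hmu pos by (metis less_imp_le real_sqrt_le_iff real_sqrt_pow2 mult_nonneg_nonneg divide_nonneg_pos zero_less_numeral power_mono)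
    define xs where "xs = - D * mu / (2 * lam)"
    define s where "s = lam * rho + mu\<^sup>2"
    have s: "s > 0" using pos by (simp add: s_def add_pos_nonneg)
    define y0 where "y0 = - D * mu\<^sup>2 / s"
    define ub where "ub = - D * mu * rho / s"
    have y0Y: "y0 \<in> Y"
    proof -
      have "2 * mu\<^sup>2 \<le> s" using mu2 zero_le_power2[of mu] unfolding s_def by linarith
      then have "D * mu\<^sup>2 * 2 \<le> D * s" using pos by simp
      then have "D * mu\<^sup>2 / s \<le> D / 2" using s by (simp add: field_simps)
      moreover have "0 \<le> D * mu\<^sup>2 / s" using pos s by simp
      ultimately show ?thesis by (simp add: Y_def y0_def)
    qed
    have hat: "((moreau UNIV lam (maxval Y (lin_model (F 1 (-1) lam mu rho) 0))) has_real_derivative 0) (at xs)"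
    proof -
      have "((moreau UNIV lam (maxval Y (lin_model (F 1 (-1) lam mu rho) 0))) has_real_derivative (2 * lam * (xs - xs))) (at xs)"
        unfolding lin1
      proof (rule env_deriv[where yy = "-D/2" and a = 0 and b = "- mu * D / 2"])
        show "lam > 0" by (rule pos)
        show "- D / 2 \<in> Y" using pos by (simp add: Y_def)
        show "bdd_above ((\<lambda>y. - (lam * u\<^sup>2 / 2) + mu * u * 0 + - 1 * rho * 0\<^sup>2 / 2 + (mu * u + - 1 * rho * 0) * (y - 0)) ` Y)" for u
          using bdd[of "- (lam * u\<^sup>2 / 2)" "mu * u" 0] by simp
        show "- (lam * xs\<^sup>2 / 2) + mu * xs * 0 + - 1 * rho * 0\<^sup>2 / 2 + (mu * xs + - 1 * rho * 0) * (y - 0)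
              \<le> - (lam * xs\<^sup>2 / 2) + mu * xs * 0 + - 1 * rho * 0\<^sup>2 / 2 + (mu * xs + - 1 * rho * 0) * (- D / 2 - 0)" if "y \<in> Y" for y
        proof -
          have "mu * xs \<le> 0" using pos by (simp add: xs_def mult_nonneg_nonneg)
          moreover have "y \<ge> - D / 2" using that by (simp add: Y_def)
          ultimately have "mu * xs * y \<le> mu * xs * (- D / 2)" by (rule mult_left_mono_neg[rotated])
          then show ?thesis by simp
        qed
        show "- (lam * u\<^sup>2 / 2) + mu * u * 0 + - 1 * rho * 0\<^sup>2 / 2 + (mu * u + - 1 * rho * 0) * (- D / 2 - 0) = - lam * u\<^sup>2 / 2 + 0 + - mu * D / 2 * u" for u
          by (simp add: algebra_simps)
        show "lam * xs = 2 * lam * xs - - mu * D / 2" using pos by (simp add: xs_def field_simps)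
      qed
      then show ?thesis by simp
    qed
    show "let f = F 1 (-1) lam mu rho in
       \<exists>yh \<in> Y. \<exists>xs :: real.
         ((moreau UNIV lam (maxval Y (lin_model f yh))) has_real_derivative 0) (at xs) \<and>
         (\<exists>d. ((moreau UNIV lam (maxval Y f)) has_real_derivative d) (at xs) \<and>
              \<bar>d\<bar> \<ge> mu * D / 3)"
      unfolding Let_def
    proof (intro bexI exI conjI)
      show "(0::real) \<in> Y" using pos by (simp add: Y_def)
      show "((moreau UNIV lam (maxval Y (lin_model (F 1 (-1) lam mu rho) 0))) has_real_derivative 0) (at xs)"
        by (rule hat)
      have muub: "mu * ub = rho * y0" using s by (simp add: ub_def y0_def field_simps power2_eq_square)
      show "((moreau UNIV lam (maxval Y (F 1 (-1) lam mu rho))) has_real_derivative (2 * lam * (xs - ub))) (at xs)"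
        unfolding F1
      proof (rule env_deriv[where yy = y0 and a = "- rho * y0\<^sup>2 / 2" and b = "mu * y0"])
        show "lam > 0" by (rule pos)
        show "y0 \<in> Y" by (rule y0Y)
        show "bdd_above ((\<lambda>y. - (lam * u\<^sup>2 / 2) + mu * u * y + - 1 * rho * y\<^sup>2 / 2) ` Y)" for u
          using bdd[of "- (lam * u\<^sup>2 / 2)" "mu * u" "- rho / 2"] by simp
        show "- (lam * ub\<^sup>2 / 2) + mu * ub * y + - 1 * rho * y\<^sup>2 / 2
              \<le> - (lam * ub\<^sup>2 / 2) + mu * ub * y0 + - 1 * rho * y0\<^sup>2 / 2" if "y \<in> Y" for y
        proof -
          have "0 \<le> rho * (y - y0)\<^sup>2" using pos by simp
          then show ?thesis unfolding muub by (simp add: power2_eq_square algebra_simps)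
        qed
        show "- (lam * u\<^sup>2 / 2) + mu * u * y0 + - 1 * rho * y0\<^sup>2 / 2 = - lam * u\<^sup>2 / 2 + - rho * y0\<^sup>2 / 2 + mu * y0 * u" for u
          by (simp add: algebra_simps)
        show "lam * ub = 2 * lam * xs - mu * y0"
          using s pos by (simp add: ub_def y0_def xs_def s_def field_simps power2_eq_square)
      qed
      have dval0: "2 * lam * (xs - ub) = D * mu * (2 * lam * rho - s) / s"
        using s pos by (simp add: ub_def xs_def field_simps)
      have dval: "2 * lam * (xs - ub) = D * mu * (lam * rho - mu\<^sup>2) / s"
        unfolding dval0 by (simp add: s_def)
      have "mu * D / 3 \<le> D * mu * (lam * rho - mu\<^sup>2) / s"
      proof -
        have "s \<le> 3 * (lam * rho - mu\<^sup>2)" using mu2 by (simp add: s_def)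
        then have "D * mu * s \<le> D * mu * (3 * (lam * rho - mu\<^sup>2))"
          using pos by (intro mult_left_mono) auto
        then show ?thesis using s by (simp add: field_simps)
      qed
      then show "mu * D / 3 \<le> \<bar>2 * lam * (xs - ub)\<bar>" unfolding dval by linarith
    qed
  }
  {
    assume hmu: "mu \<ge> sqrt (lam * rho / 2)"
    show "\<exists>mub rhob. 0 \<le> mub \<and> mub \<le> mu \<and> 0 \<le> rhob \<and> rhob \<le> rho \<and>
       (let f = F 1 1 lam mub rhob in
       \<exists>yh \<in> Y. \<exists>xs :: real.
         ((moreau UNIV lam (maxval Y (lin_model f yh))) has_real_derivative 0) (at xs) \<and>
         (\<exists>d. ((moreau UNIV lam (maxval Y f)) has_real_derivative d) (at xs) \<and>
              \<bar>d\<bar> \<ge> sqrt (lam * rho * D\<^sup>2 / 8)))"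
    proof -
      define m where "m = sqrt (lam * rho / 2)"
      define r where "r = rho / 4"
      have m0: "m > 0" using pos by (simp add: m_def)
      have m2: "m\<^sup>2 = lam * rho / 2" using pos by (simp add: m_def)
      define xs where "xs = - r * D / (2 * m)"
      have lamxs: "lam * xs = - m * D / 4"
      proof -
        have "lam * xs = - (lam * rho) * D / (8 * m)" using m0 by (simp add: xs_def r_def field_simps)
        also have "\<dots> = - (2 * m\<^sup>2) * D / (8 * m)"
        proof -
          have lr: "lam * rho = 2 * m\<^sup>2" using m2 by simp
          show ?thesis by (simp only: lr)
        qed
        also have "\<dots> = - m * D / 4" using m0 by (simp add: field_simps power2_eq_square)
        finally show ?thesis .
      qed
      have mxs: "m * xs = - (r * D / 2)" using m0 by (simp add: xs_def field_simps)
      have hat: "((moreau UNIV lam (maxval Y (lin_model (F 1 1 lam m r) (D/2)))) has_real_derivative 0) (at xs)"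
      proof -
        have "((moreau UNIV lam (maxval Y (lin_model (F 1 1 lam m r) (D/2)))) has_real_derivative (2 * lam * (xs - xs))) (at xs)"
          unfolding lin1
        proof (rule env_deriv[where yy = "-D/4" and a = "- r * D\<^sup>2 / 4" and b = "- m * D / 4"])
          show "lam > 0" by (rule pos)
          show "- D / 4 \<in> Y" using pos by (simp add: Y_def)
          show "bdd_above ((\<lambda>y. - (lam * u\<^sup>2 / 2) + m * u * (D / 2) + 1 * r * (D / 2)\<^sup>2 / 2 + (m * u + 1 * r * (D / 2)) * (y - D / 2)) ` Y)" for u
            unfolding Y_def by (intro bddI continuous_intros)
          show "- (lam * xs\<^sup>2 / 2) + m * xs * (D / 2) + 1 * r * (D / 2)\<^sup>2 / 2 + (m * xs + 1 * r * (D / 2)) * (y - D / 2)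
              \<le> - (lam * xs\<^sup>2 / 2) + m * xs * (D / 2) + 1 * r * (D / 2)\<^sup>2 / 2 + (m * xs + 1 * r * (D / 2)) * (- D / 4 - D / 2)" for y
            using mxs by simp
          show "- (lam * u\<^sup>2 / 2) + m * u * (D / 2) + 1 * r * (D / 2)\<^sup>2 / 2 + (m * u + 1 * r * (D / 2)) * (- D / 4 - D / 2) =
               - lam * u\<^sup>2 / 2 + - r * D\<^sup>2 / 4 + - m * D / 4 * u" for u
            by (simp add: algebra_simps power2_eq_square)
          show "lam * xs = 2 * lam * xs - - m * D / 4" using lamxs mult.assoc[of 2 lam xs] by linarith
        qed
        then show ?thesis by simp
      qed
      have tru: "((moreau UNIV lam (maxval Y (F 1 1 lam m r))) has_real_derivative (2 * lam * (xs - 0))) (at xs)"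
        unfolding F1
      proof (rule env_deriv[where yy = "-D/2" and a = "r * D\<^sup>2 / 8" and b = "- m * D / 2"])
        show "lam > 0" by (rule pos)
        show "- D / 2 \<in> Y" using pos by (simp add: Y_def)
        show "bdd_above ((\<lambda>y. - (lam * u\<^sup>2 / 2) + m * u * y + 1 * r * y\<^sup>2 / 2) ` Y)" for u
          using bdd[of "- (lam * u\<^sup>2 / 2)" "m * u" "r / 2"] by simp
        show "- (lam * 0\<^sup>2 / 2) + m * 0 * y + 1 * r * y\<^sup>2 / 2 \<le> - (lam * 0\<^sup>2 / 2) + m * 0 * (- D / 2) + 1 * r * (- D / 2)\<^sup>2 / 2"
          if "y \<in> Y" for y
        proof -
          have "\<bar>y\<bar> \<le> D / 2" using that unfolding Y_def by (auto simp: abs_le_iff)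
          then have "\<bar>y\<bar>\<^sup>2 \<le> (D / 2)\<^sup>2" by (intro power_mono) auto
          then have "y\<^sup>2 \<le> (D / 2)\<^sup>2" by simp
          then have "r * y\<^sup>2 \<le> r * (D / 2)\<^sup>2" using pos by (intro mult_left_mono) (auto simp: r_def)
          then show ?thesis by simp
        qed
        show "- (lam * u\<^sup>2 / 2) + m * u * (- D / 2) + 1 * r * (- D / 2)\<^sup>2 / 2 = - lam * u\<^sup>2 / 2 + r * D\<^sup>2 / 8 + - m * D / 2 * u" for u
          by (simp add: algebra_simps power2_eq_square)
        show "lam * 0 = 2 * lam * xs - - m * D / 2" using lamxs mult.assoc[of 2 lam xs] by linarith
      qed
      have dabs: "\<bar>2 * lam * (xs - 0)\<bar> = m * D / 2" using lamxs m0 pos by simp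
      have sq: "sqrt (lam * rho * D\<^sup>2 / 8) = m * D / 2"
      proof -
        have "lam * rho * D\<^sup>2 / 8 = (m * D / 2)\<^sup>2" using m2 by (simp add: power_mult_distrib field_simps)
        then show ?thesis using m0 pos by simp
      qed
      have mle: "m \<le> mu" using hmu by (simp add: m_def)
      have "0 \<le> m \<and> m \<le> mu \<and> 0 \<le> r \<and> r \<le> rho \<and>
       (\<exists>yh \<in> Y. \<exists>xs :: real.
         ((moreau UNIV lam (maxval Y (lin_model (F 1 1 lam m r) yh))) has_real_derivative 0) (at xs) \<and>
         (\<exists>d. ((moreau UNIV lam (maxval Y (F 1 1 lam m r))) has_real_derivative d) (at xs) \<and>
              \<bar>d\<bar> \<ge> sqrt (lam * rho * D\<^sup>2 / 8)))"
      proof (intro conjI bexI exI)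
        show "(D/2) \<in> Y" using pos by (simp add: Y_def)
        show "sqrt (lam * rho * D\<^sup>2 / 8) \<le> \<bar>2 * lam * (xs - 0)\<bar>" using dabs sq by simp
      qed (use m0 mle pos hat tru in \<open>auto simp: r_def\<close>)
      then show ?thesis unfolding Let_def by blast
    qed
  }
qed

end
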